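(* Let $D=(V,E;s,t)$, $N$, and $\mathscr{B}$ be as in the context. For every jump $Q\in\mathscr{J}$ there exists either an $s$-$t$ path $P$ with $\mathscr{J}_P=\{Q\}$ or a cycle $C$ with $\mathscr{J}_C=\{Q\}$.
   Context: $D=(V,E;s,t)$ is a directed network with unit arc capacities (parallel arcs allowed), $N\subseteq E$, and every arc lies on some $s$-$t$ path and every $s$-$t$ path contains an arc of $N$. A path is a set of arcs joining a sequence of distinct vertices along the same direction. Two paths are disjoint on $N$ if they share no arc of $N$. Fix a maximum-cardinality family $\mathscr{B}$ of $s$-$t$ paths pairwise disjoint on $N$; a $\mathscr{B}$-vertex is a vertex on some path of $\mathscr{B}$. A $u$-$v$ jump is a $u$-$v$ path whose end vertices $u,v$ are $\mathscr{B}$-vertices, none of whose intermediate vertices is a $\mathscr{B}$-vertex, and which is not a single arc of a path of $\mathscr{B}$; $(u,v)$ is its jump pair; $\mathscr{J}$ is the set of all jumps. For an $s$-$t$ path or a cycle $W$, cut $W$ at each of its $\mathscr{B}$-vertices into consecutive pieces, each going from a $\mathscr{B}$-vertex to the next $\mathscr{B}$-vertex along $W$; $\mathscr{J}_W$ is the set of those pieces that are jumps (i.e. are not single arcs of paths of $\mathscr{B}$), so that $W=P_0*Q_1*P_1*\cdots*Q_r*P_r$ with $P_i$ (possibly empty) subpaths of paths of $\mathscr{B}$ and $\mathscr{J}_W=\{Q_1,\dots,Q_r\}$. *)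

theory Defs
  imports "Graph_Theory.Digraph" "Graph_Theory.Arc_Walk"
begin

context pre_digraph
begin

definition N_disj_family :: "'a \<Rightarrow> 'a \<Rightarrow> 'b set \<Rightarrow> 'b awalk set \<Rightarrow> bool" where
  "N_disj_family s t N B \<longleftrightarrow>
     (\<forall>P\<in>B. apath s P t) \<and> (\<forall>P\<in>B. \<forall>P'\<in>B. P \<noteq> P' \<longrightarrow> set P \<inter> set P' \<inter> N = {})"

definition max_N_disj_family :: "'a \<Rightarrow> 'a \<Rightarrow> 'b set \<Rightarrow> 'b awalk set \<Rightarrow> bool" where
  "max_N_disj_family s t N B \<longleftrightarrow> N_disj_family s t N B \<and> finite B \<and>
     (\<forall>B'. N_disj_family s t N B' \<longrightarrow> card B' \<le> card B)"

definition B_verts :: "'a \<Rightarrow> 'b awalk set \<Rightarrow> 'a set" where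
  "B_verts s B = (\<Union>P\<in>B. set (awalk_verts s P))"

definition single_B_arc :: "'b awalk set \<Rightarrow> 'b awalk \<Rightarrow> bool" where
  "single_B_arc B Q \<longleftrightarrow> (\<exists>P\<in>B. \<exists>e\<in>set P. Q = [e])"

definition jump :: "'a \<Rightarrow> 'b awalk set \<Rightarrow> 'b awalk \<Rightarrow> bool" where
  "jump s B Q \<longleftrightarrow> Q \<noteq> [] \<and> (\<exists>u v. apath u Q v \<and> u \<in> B_verts s B \<and> v \<in> B_verts s B \<and>
      (\<forall>w \<in> set (butlast (tl (awalk_verts u Q))). w \<notin> B_verts s B)) \<and>
      \<not> single_B_arc B Q"

definition B_piece :: "'a \<Rightarrow> 'b awalk set \<Rightarrow> 'b awalk \<Rightarrow> bool" where
  "B_piece s B Q \<longleftrightarrow> Q \<noteq> [] \<and> tail G (hd Q) \<in> B_verts s B \<and> head G (last Q) \<in> B_verts s B \<and>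
      (\<forall>e \<in> set (butlast Q). head G e \<notin> B_verts s B)"

definition J_path :: "'a \<Rightarrow> 'b awalk set \<Rightarrow> 'b awalk \<Rightarrow> 'b awalk set" where
  "J_path s B W = {Q. (\<exists>xs ys. W = xs @ Q @ ys) \<and> B_piece s B Q \<and> \<not> single_B_arc B Q}"

text \<open>J_C for a cycle C: the same, with segments taken cyclically (segments of rotations).\<close>
definition J_cycle :: "'a \<Rightarrow> 'b awalk set \<Rightarrow> 'b awalk \<Rightarrow> 'b awalk set" where
  "J_cycle s B C = {Q. (\<exists>k xs ys. rotate k C = xs @ Q @ ys) \<and> B_piece s B Q \<and> \<not> single_B_arc B Q}"

end

end

theory Submission
  imports Defs
begin

context wf_digraph begin

lemma cas_nth: "cas x p y \<Longrightarrow> Suc j < length p \<Longrightarrow> head G (p!j) = tail G (p!Suc j)"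
proof (induct p arbitrary: x j)
  case Nil then show ?case by simp
next
  case (Cons e es)
  then show ?case by (cases j; cases es) auto
qed

lemma verts_nth:
  assumes "cas u p v" "i < length p"
  shows "awalk_verts u p ! i = tail G (p!i)" "awalk_verts u p ! Suc i = head G (p!i)"
proof -
  show "awalk_verts u p ! i = tail G (p!i)"
    using assms by (subst awalk_verts_conv) (auto simp: nth_append)
  show "awalk_verts u p ! Suc i = head G (p!i)"
    using assms by (subst awalk_verts_conv'[OF assms(1)]) auto
qed

lemma verts_interior:
  assumes "0 < i" "i < length p"
  shows "awalk_verts u p ! i \<in> set (butlast (tl (awalk_verts u p)))"
proof -
  have L: "length (awalk_verts u p) = Suc (length p)" by (simp add: length_awalk_verts)
  have "butlast (tl (awalk_verts u p)) ! (i - 1) = awalk_verts u p ! i"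
    using assms L by (simp add: nth_butlast nth_tl)
  moreover have "i - 1 < length (butlast (tl (awalk_verts u p)))" using assms L by simp
  ultimately show ?thesis by (metis nth_mem)
qed

lemma piece_unique:
  assumes Qp: "apath u Q v" and Qne: "Q \<noteq> []"
  and int: "\<forall>w\<in>set (butlast (tl (awalk_verts u Q))). w \<notin> B_verts s B"
  and wk: "awalk x Q' y" and sub: "set Q' \<subseteq> (\<Union>P\<in>B. set P) \<union> set Q"
  and pc: "B_piece s B Q'" and ns: "\<not> single_B_arc B Q'"
  and fam: "\<forall>P\<in>B. apath s P t"
  shows "Q' = Q"
proof -
  let ?vs = "awalk_verts u Q"
  let ?Bv = "B_verts s B"
  have cQ: "cas u Q v" using Qp by (auto simp: apath_def awalk_def)
  have dist: "distinct ?vs" using Qp by (auto simp: apath_def)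
  have lenvs: "length ?vs = Suc (length Q)" by (simp add: length_awalk_verts)
  have tlQ: "\<And>i. i < length Q \<Longrightarrow> tail G (Q!i) = ?vs!i" using verts_nth[OF cQ] by simp
  have hdQ: "\<And>i. i < length Q \<Longrightarrow> head G (Q!i) = ?vs!Suc i" using verts_nth[OF cQ] by simp
  have intr: "\<And>i. 0 < i \<Longrightarrow> i < length Q \<Longrightarrow> ?vs!i \<notin> ?Bv" using int verts_interior by blast
  have BAv: "\<And>e P. P\<in>B \<Longrightarrow> e \<in> set P \<Longrightarrow> tail G e \<in> ?Bv \<and> head G e \<in> ?Bv"
  proof -
    fix e P assume a: "P \<in> B" "e \<in> set P"
    then have "awalk s P t" using fam by (auto simp: apath_def)
    then have "tail G e \<in> set (awalk_verts s P)" "head G e \<in> set (awalk_verts s P)"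
      using a awalk_verts_arc1 awalk_verts_arc2 by auto
    then show "tail G e \<in> ?Bv \<and> head G e \<in> ?Bv" using a unfolding B_verts_def by blast
  qed
  have inQ: "\<And>e. e \<in> set Q' \<Longrightarrow> (tail G e \<notin> ?Bv \<or> head G e \<notin> ?Bv) \<Longrightarrow> e \<in> set Q"
    using sub BAv by blast
  define n where "n = length Q'"
  have n0: "0 < n" using pc by (auto simp: B_piece_def n_def)
  have Q'ne: "Q' \<noteq> []" using pc by (simp add: B_piece_def)
  have "tail G (hd Q') \<in> ?Bv" using pc by (simp add: B_piece_def)
  moreover have "hd Q' = Q'!0" by (rule hd_conv_nth[OF Q'ne])
  ultimately have hd': "tail G (Q'!0) \<in> ?Bv" by simp
  have "head G (last Q') \<in> ?Bv" using pc by (simp add: B_piece_def)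
  moreover have "last Q' = Q'!(n-1)" unfolding n_def by (rule last_conv_nth[OF Q'ne])
  ultimately have last': "head G (Q'!(n-1)) \<in> ?Bv" by metis
  have mid: "\<And>j. Suc j < n \<Longrightarrow> head G (Q'!j) \<notin> ?Bv"
  proof -
    fix j assume "Suc j < n"
    then have jl: "j < length (butlast Q')" using n_def by simp
    then have "butlast Q' ! j = Q'!j" by (rule nth_butlast)
    moreover have "butlast Q' ! j \<in> set (butlast Q')" using jl by (rule nth_mem)
    ultimately have "Q'!j \<in> set (butlast Q')" by simp
    then show "head G (Q'!j) \<notin> ?Bv" using pc by (auto simp: B_piece_def)
  qed
  have chain: "\<And>j. Suc j < n \<Longrightarrow> head G (Q'!j) = tail G (Q'!Suc j)"
    using wk cas_nth by (auto simp: awalk_def n_def)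
  have claim: "\<And>j. j < n \<Longrightarrow> j < length Q \<and> Q'!j = Q!j"
  proof -
    fix j show "j < n \<Longrightarrow> j < length Q \<and> Q'!j = Q!j"
    proof (induct j)
      case 0
      have e0: "Q'!0 \<in> set Q"
      proof (cases "n = 1")
        case True
        then have "Q' = [Q'!0]" using n_def by (cases Q') auto
        then have "\<not> (\<exists>P\<in>B. Q'!0 \<in> set P)" using ns unfolding single_B_arc_def by metis
        moreover have "Q'!0 \<in> set Q'" using n0 n_def by simp
        ultimately show ?thesis using sub by blast
      next
        case False
        then have "head G (Q'!0) \<notin> ?Bv" using mid n0 by simp
        then show ?thesis using inQ n0 n_def by simp
      qed
      then obtain i where i: "i < length Q" "Q!i = Q'!0" by (metis in_set_conv_nth)
      have "i = 0" using hd' intr[of i] tlQ[OF i(1)] i by auto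
      then show ?case using i Qne by auto
    next
      case (Suc j)
      then have IH: "j < length Q" "Q'!j = Q!j" by auto
      have "tail G (Q'!Suc j) \<notin> ?Bv" using mid[of j] chain[of j] Suc by simp
      then have "Q'!Suc j \<in> set Q" using inQ Suc n_def by simp
      then obtain i where i: "i < length Q" "Q!i = Q'!Suc j" by (metis in_set_conv_nth)
      have "?vs!i = ?vs!Suc j" using tlQ[OF i(1)] hdQ[OF IH(1)] chain[of j] Suc IH i by simp
      then have "i = Suc j" using dist lenvs i IH by (simp add: nth_eq_iff_index_eq)
      then show ?case using i by simp
    qed
  qed
  have "n - 1 < length Q" using claim[of "n-1"] n0 by simp
  then have "n \<le> length Q" using n0 by linarith
  moreover have "\<not> n < length Q"
  proof
    assume a: "n < length Q"
    have "head G (Q'!(n-1)) = ?vs!n" using claim[of "n-1"] n0 hdQ[of "n-1"] a by simp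
    then show False using intr[of n] a n0 last' by simp
  qed
  ultimately have "n = length Q" by simp
  then show ?thesis using claim n_def by (simp add: nth_equalityI)
qed


lemma B_arc_verts:
  assumes fam: "\<forall>P\<in>B. apath s P t" and a: "P \<in> B" "e \<in> set P"
  shows "tail G e \<in> B_verts s B \<and> head G e \<in> B_verts s B"
proof -
  have "awalk s P t" using fam a by (auto simp: apath_def)
  then have "tail G e \<in> set (awalk_verts s P)" "head G e \<in> set (awalk_verts s P)"
    using a awalk_verts_arc1 awalk_verts_arc2 by auto
  then show ?thesis using a unfolding B_verts_def by blast
qed

lemma set_tl_sub: "set (tl xs) \<subseteq> {last xs} \<union> set (butlast xs)"
proof (cases xs rule: rev_cases)
  case Nil then show ?thesis by simp
next
  case (snoc ys y)
  then show ?thesis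
  proof (cases "ys = []")
    case True then show ?thesis using snoc by simp
  next
    case False
    then have "tl (ys @ [y]) = tl ys @ [y]" by simp
    moreover have "set (tl ys) \<subseteq> set ys" using False by (cases ys) auto
    ultimately show ?thesis using snoc by auto
  qed
qed

lemma set_last_butlast: "ys \<noteq> [] \<Longrightarrow> set ys \<subseteq> insert (last ys) (set (butlast ys))"
  by (induct ys) auto

lemma set_tl_sub2: "set (tl xs) \<subseteq> {last xs} \<union> set (butlast (tl xs))"
proof (cases "tl xs = []")
  case True then show ?thesis by simp
next
  case False
  then have "last (tl xs) = last xs" by (cases xs) auto
  then show ?thesis using set_last_butlast[OF False] by simp
qed

lemma hd_in_butlast: "2 \<le> length xs \<Longrightarrow> hd xs \<in> set (butlast xs)"
  by (cases xs) auto

lemma hd_notin_tl: "distinct xs \<Longrightarrow> xs \<noteq> [] \<Longrightarrow> hd xs \<notin> set (tl xs)"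
  by (cases xs) auto

lemma first_hit:
  "awalk v p y \<Longrightarrow> x \<in> set (awalk_verts v p) \<Longrightarrow> x \<in> S \<Longrightarrow>
   \<exists>p1 p2 w. p = p1 @ p2 \<and> awalk v p1 w \<and> w \<in> S \<and> (\<forall>z\<in>set (butlast (awalk_verts v p1)). z \<notin> S)"
proof (induct p arbitrary: v)
  case Nil
  then have "awalk v [] v" "v \<in> S" by (auto simp: awalk_Nil_iff)
  then show ?case by (intro exI[of _ "[]"] exI[of _ "[]"] exI[of _ v]) simp
next
  case (Cons e es)
  show ?case
  proof (cases "v \<in> S")
    case True
    have "awalk v [] v" using Cons.prems by (auto simp: awalk_Nil_iff awalk_Cons_iff)
    then show ?thesis using True by (intro exI[of _ "[]"] exI[of _ "e # es"] exI[of _ v]) simp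
  next
    case False
    have e: "e \<in> arcs G" "v = tail G e" "awalk (head G e) es y" using Cons.prems(1) by (auto simp: awalk_Cons_iff)
    have "x \<in> set (awalk_verts (head G e) es)" using Cons.prems False e by auto
    then obtain p1 p2 w where h: "es = p1 @ p2" "awalk (head G e) p1 w" "w \<in> S"
      "\<forall>z\<in>set (butlast (awalk_verts (head G e) p1)). z \<notin> S"
      using Cons.hyps e Cons.prems(3) by blast
    have "awalk v (e # p1) w" using h e by (auto simp: awalk_Cons_iff)
    moreover have "butlast (awalk_verts v (e # p1)) = v # butlast (awalk_verts (head G e) p1)"
      using e by simp
    ultimately show ?thesis using h False
      by (intro exI[of _ "e # p1"] exI[of _ p2] exI[of _ w]) auto
  qed
qed

lemma rotate_awalk:
  assumes "awalk w C w" shows "\<exists>x. awalk x (rotate k C) x"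
proof (cases "C = []")
  case True then show ?thesis using assms by auto
next
  case False
  define m where "m = k mod length C"
  have r: "rotate k C = drop m C @ take m C" unfolding m_def by (rule rotate_drop_take)
  have "awalk w (take m C @ drop m C) w" using assms by simp
  then have a: "awalk w (take m C) (awlast w (take m C))" "awalk (awlast w (take m C)) (drop m C) w"
    by (simp_all only: awalk_append_iff)
  have "awalk (awlast w (take m C)) (drop m C @ take m C) (awlast w (take m C))"
    using a(2) a(1) by (rule awalk_appendI)
  then show ?thesis using r by metis
qed


lemma awalk_last: "awalk u p v \<Longrightarrow> awlast u p = v"
  by (simp add: awalk_def awlast_if_cas)

lemma awalk_hd: "awalk u p v \<Longrightarrow> awhd u p = u"
  unfolding awalk_def using awhd_if_cas by blast

lemma in_tl: "x \<in> set (tl xs) \<Longrightarrow> x \<in> set xs"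
  by (cases xs) auto

lemma awalk_last_in: "awalk u p v \<Longrightarrow> v \<in> set (awalk_verts u p)"
  by (metis awalk_last last_in_set awalk_verts_non_Nil)

lemma main:
  assumes fam: "\<forall>P\<in>B. apath s P t" and jmp: "jump s B Q"
  shows "(\<exists>P. apath s P t \<and> J_path s B P = {Q}) \<or> (\<exists>C. cycle C \<and> J_cycle s B C = {Q})"
proof -
  let ?Bv = "B_verts s B"
  let ?BA = "\<Union>P\<in>B. set P"
  from jmp obtain u v where Qne: "Q \<noteq> []" and Qp: "apath u Q v" and uB: "u \<in> ?Bv" and vB: "v \<in> ?Bv"
    and int: "\<forall>w\<in>set (butlast (tl (awalk_verts u Q))). w \<notin> ?Bv" and ns: "\<not> single_B_arc B Q"
    unfolding jump_def by blast
  let ?vs = "awalk_verts u Q"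
  have Qw: "awalk u Q v" using Qp by (simp add: apath_def)
  have cQ: "cas u Q v" using Qw by (simp add: awalk_def)
  have distQ: "distinct ?vs" using Qp by (simp add: apath_def)
  have hdvs: "hd ?vs = u" using awhd_if_cas[OF cQ] .
  have lastvs: "last ?vs = v" using awlast_if_cas[OF cQ] .
  have vsne: "?vs \<noteq> []" by simp
  have tlvs: "set (tl ?vs) \<subseteq> {v} \<union> set (butlast (tl ?vs))" using set_tl_sub2[of ?vs] lastvs by simp
  have setvs: "set ?vs \<subseteq> {u, v} \<union> set (butlast (tl ?vs))"
  proof -
    have "?vs = hd ?vs # tl ?vs" using vsne by simp
    then have "set ?vs = insert u (set (tl ?vs))" using hdvs by (metis list.simps(15))
    then show ?thesis using tlvs by auto
  qed
  have BAv: "\<And>e. e \<in> ?BA \<Longrightarrow> tail G e \<in> ?Bv \<and> head G e \<in> ?Bv" using B_arc_verts[OF fam] by blast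
  have pieceQ: "B_piece s B Q"
  proof -
    have "tail G (hd Q) = u" using cQ Qne by (simp add: cas_simp)
    moreover have "head G (last Q) = v" using lastvs Qne by (simp add: awalk_verts_conv)
    moreover have "\<forall>e\<in>set (butlast Q). head G e \<notin> ?Bv"
    proof
      fix e assume "e \<in> set (butlast Q)"
      then obtain i where i: "i < length (butlast Q)" "e = butlast Q ! i" by (metis in_set_conv_nth)
      then have ei: "e = Q ! i" by (simp add: nth_butlast)
      have il: "Suc i < length Q" using i by simp
      have "head G e = ?vs ! Suc i" using verts_nth(2)[OF cQ, of i] il ei by simp
      moreover have "?vs ! Suc i \<in> set (butlast (tl ?vs))" using verts_interior[of "Suc i" Q u] il by simp
      ultimately show "head G e \<notin> ?Bv" using int by simp
    qed
    ultimately show ?thesis using Qne uB vB unfolding B_piece_def by simp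
  qed
  obtain P1 where P1: "P1 \<in> B" "u \<in> set (awalk_verts s P1)" using uB unfolding B_verts_def by blast
  have P1a: "apath s P1 t" using fam P1 by simp
  then have "awalk s P1 t" by (simp add: apath_def)
  then obtain A1 A2 where A: "P1 = A1 @ A2" "awalk s A1 u" "awalk u A2 t" using awalk_decomp P1 by blast
  have "awlast s A1 = u" using A(2) by (rule awalk_last)
  then have A1p: "apath s A1 u" using P1a A(1) apath_append_iff by metis
  have SA1: "set (awalk_verts s A1) \<subseteq> ?Bv"
  proof -
    have "awalk_verts s P1 = awalk_verts s A1 @ tl (awalk_verts (awlast s A1) A2)"
      using A(1) \<open>awalk s P1 t\<close> awalk_verts_append by blast
    then have "set (awalk_verts s A1) \<subseteq> set (awalk_verts s P1)" by (metis set_append Un_upper1)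
    then show ?thesis using P1(1) unfolding B_verts_def by blast
  qed
  have A1BA: "set A1 \<subseteq> ?BA" using A(1) P1(1) by auto
  obtain P2 where P2: "P2 \<in> B" "v \<in> set (awalk_verts s P2)" using vB unfolding B_verts_def by blast
  have P2a: "apath s P2 t" using fam P2 by simp
  then have "awalk s P2 t" by (simp add: apath_def)
  then obtain B1 B2 where BB: "P2 = B1 @ B2" "awalk s B1 v" "awalk v B2 t" using awalk_decomp P2 by blast
  have "awlast s B1 = v" using BB(2) by (rule awalk_last)
  then have B2p: "apath v B2 t" using P2a BB(1) apath_append_iff by metis
  have SB2: "set (awalk_verts v B2) \<subseteq> ?Bv"
  proof -
    have "awalk_verts s P2 = butlast (awalk_verts s B1) @ awalk_verts (awlast s B1) B2"
      using BB(1) \<open>awalk s P2 t\<close> awalk_verts_append2 by blast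
    then have "set (awalk_verts v B2) \<subseteq> set (awalk_verts s P2)" using \<open>awlast s B1 = v\<close> by (metis set_append Un_upper2)
    then show ?thesis using P2(1) unfolding B_verts_def by blast
  qed
  have B2BA: "set B2 \<subseteq> ?BA" using BB(1) P2(1) by auto
  let ?S = "set (awalk_verts s A1)"
  let ?T = "set (awalk_verts v B2)"
  have uS: "u \<in> ?S" using A(2) by (rule awalk_last_in)
  have vT: "v \<in> ?T" using BB(3) by (rule hd_in_awalk_verts)
  have distB2: "distinct (awalk_verts v B2)" using B2p by (simp add: apath_def)
  have hdB2: "hd (awalk_verts v B2) = v" using BB(3) by (rule awalk_hd)
  show ?thesis
  proof (cases "?S \<inter> ?T = {}")
    case True
    define W where "W = A1 @ Q @ B2"
    have "awlast u Q = v" using lastvs .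
    moreover have "set ?vs \<inter> set (tl (awalk_verts v B2)) = {}"
    proof -
      { fix z assume z: "z \<in> set ?vs" "z \<in> set (tl (awalk_verts v B2))"
        then have zT: "z \<in> ?T" by (blast dest: in_tl)
        have "z \<noteq> v" using z(2) hd_notin_tl[OF distB2] hdB2 by auto
        moreover have "z \<noteq> u" using zT uS True by blast
        moreover have "z \<notin> set (butlast (tl ?vs))" using zT SB2 int by blast
        ultimately have False using z(1) setvs by blast }
      then show ?thesis by blast
    qed
    ultimately have QB2: "apath u (Q @ B2) t" using Qp B2p apath_append_iff by metis
    have QB2w: "awalk u (Q @ B2) t" using QB2 by (simp add: apath_def)
    have "awalk_verts u (Q @ B2) = ?vs @ tl (awalk_verts v B2)"
      using awalk_verts_append[OF QB2w] lastvs by simp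
    then have tlQB2: "tl (awalk_verts u (Q @ B2)) = tl ?vs @ tl (awalk_verts v B2)" using vsne by simp
    have "?S \<inter> set (tl (awalk_verts u (Q @ B2))) = {}"
    proof -
      { fix z assume z: "z \<in> ?S" "z \<in> set (tl (awalk_verts u (Q @ B2)))"
        then have "z \<in> set (tl ?vs) \<or> z \<in> set (tl (awalk_verts v B2))" using tlQB2 by simp
        moreover have "z \<notin> set (tl (awalk_verts v B2))"
          using z(1) True by (blast dest: in_tl)
        moreover have "z \<noteq> v" using z(1) True vT by blast
        moreover have "z \<notin> set (butlast (tl ?vs))" using z(1) SA1 int by blast
        ultimately have False using tlvs by blast }
      then show ?thesis by blast
    qed
    then have Wp: "apath s W t" unfolding W_def using A1p QB2 apath_append_iff
      by (metis \<open>awlast s A1 = u\<close>)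
    have Ww: "awalk s W t" using Wp by (simp add: apath_def)
    have "J_path s B W = {Q}"
    proof
      show "{Q} \<subseteq> J_path s B W" unfolding J_path_def W_def using pieceQ ns by blast
    next
      show "J_path s B W \<subseteq> {Q}"
      proof
        fix Q' assume "Q' \<in> J_path s B W"
        then obtain xs ys where Q': "W = xs @ Q' @ ys" "B_piece s B Q'" "\<not> single_B_arc B Q'"
          unfolding J_path_def by blast
        have "awalk s (xs @ (Q' @ ys)) t" using Ww Q'(1) by simp
        then have "awalk (awlast s xs) (Q' @ ys) t" by (simp only: awalk_append_iff)
        then have wk: "awalk (awlast s xs) Q' (awlast (awlast s xs) Q')" by (simp only: awalk_append_iff)
        have "set Q' \<subseteq> set W" using Q'(1) by auto
        also have "\<dots> \<subseteq> ?BA \<union> set Q" unfolding W_def using A1BA B2BA by auto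
        finally have "set Q' \<subseteq> ?BA \<union> set Q" .
        then have "Q' = Q" using piece_unique[OF Qp Qne int wk _ Q'(2) Q'(3) fam] by blast
        then show "Q' \<in> {Q}" by simp
      qed
    qed
    then show ?thesis using Wp by blast
  next
    case False
    then obtain x where x: "x \<in> ?S" "x \<in> ?T" by blast
    obtain C1 C2 w where C: "B2 = C1 @ C2" "awalk v C1 w" "w \<in> ?S"
      "\<forall>z\<in>set (butlast (awalk_verts v C1)). z \<notin> ?S"
      using first_hit[OF BB(3) x(2) x(1)] by blast
    have "awlast v C1 = w" using C(2) by (rule awalk_last)
    then have C1p: "apath v C1 w" using B2p C(1) apath_append_iff by metis
    obtain D1 D2 where D: "A1 = D1 @ D2" "awalk s D1 w" "awalk w D2 u" using awalk_decomp[OF A(2) C(3)] by blast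
    have "awlast s D1 = w" using D(2) by (rule awalk_last)
    then have D2p: "apath w D2 u" using A1p D(1) apath_append_iff by metis
    have SD2: "set (awalk_verts w D2) \<subseteq> ?S"
    proof -
      have "awalk_verts s A1 = butlast (awalk_verts s D1) @ awalk_verts (awlast s D1) D2"
        using D(1) A(2) awalk_verts_append2 by blast
      then show ?thesis using \<open>awlast s D1 = w\<close> by (metis set_append Un_upper2)
    qed
    have TC1: "set (awalk_verts v C1) \<subseteq> ?T"
    proof -
      have "awalk_verts v B2 = awalk_verts v C1 @ tl (awalk_verts (awlast v C1) C2)"
        using C(1) BB(3) awalk_verts_append by blast
      then show ?thesis by (metis set_append Un_upper1)
    qed
    define Cy where "Cy = D2 @ Q @ C1"
    have QC1w: "awalk u (Q @ C1) w" using Qw C(2) by (rule awalk_appendI)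
    have Cyw: "awalk w Cy w" unfolding Cy_def using D(3) QC1w by (rule awalk_appendI)
    have "awalk_verts u (Q @ C1) = ?vs @ tl (awalk_verts v C1)"
      using awalk_verts_append[OF QC1w] lastvs by simp
    moreover have "awalk_verts w Cy = awalk_verts w D2 @ tl (awalk_verts u (Q @ C1))"
      using awalk_verts_append[OF Cyw[unfolded Cy_def]] awalk_last[OF D(3)] unfolding Cy_def by simp
    ultimately have "awalk_verts w Cy = awalk_verts w D2 @ tl ?vs @ tl (awalk_verts v C1)"
      using vsne by simp
    then have tlCy: "tl (awalk_verts w Cy) = tl (awalk_verts w D2) @ tl ?vs @ tl (awalk_verts v C1)"
      by simp
    have distD2: "distinct (awalk_verts w D2)" using D2p by (simp add: apath_def)
    have distC1: "distinct (awalk_verts v C1)" using C1p by (simp add: apath_def)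
    have hdD2: "hd (awalk_verts w D2) = w" using D(3) by (rule awalk_hd)
    have hdC1: "hd (awalk_verts v C1) = v" using C(2) by (rule awalk_hd)
    have lastC1: "last (awalk_verts v C1) = w" using C(2) by (rule awalk_last)
    have tlD2S: "set (tl (awalk_verts w D2)) \<subseteq> ?S"
      using SD2 by (blast dest: in_tl)
    have tlC1: "set (tl (awalk_verts v C1)) \<subseteq> {w} \<union> set (butlast (awalk_verts v C1))"
      using set_tl_sub[of "awalk_verts v C1"] lastC1 by simp
    have tlC1T: "set (tl (awalk_verts v C1)) \<subseteq> ?T"
      using TC1 by (blast dest: in_tl)
    have wD2: "w \<notin> set (tl (awalk_verts w D2))" using hd_notin_tl[OF distD2] hdD2 by simp
    have vC1: "v \<notin> set (tl (awalk_verts v C1))" using hd_notin_tl[OF distC1] hdC1 by simp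
    have d1: "set (tl (awalk_verts w D2)) \<inter> set (tl ?vs) = {}"
    proof -
      { fix z assume z: "z \<in> set (tl (awalk_verts w D2))" "z \<in> set (tl ?vs)"
        have zS: "z \<in> ?S" using z(1) tlD2S by blast
        then have "z \<notin> set (butlast (tl ?vs))" using SA1 int by blast
        then have zv: "z = v" using z(2) tlvs by blast
        have False
        proof (cases "C1 = []")
          case True
          then have "v = w" using C(2) by (simp add: awalk_Nil_iff)
          then show False using z(1) zv wD2 by simp
        next
          case False
          then have "2 \<le> length (awalk_verts v C1)" by (cases C1) (simp_all add: length_awalk_verts)
          then have "v \<in> set (butlast (awalk_verts v C1))" using hd_in_butlast hdC1 by metis
          then show False using C(4) zS zv by blast
        qed }
      then show ?thesis by blast
    qed
    have d2: "set (tl (awalk_verts w D2)) \<inter> set (tl (awalk_verts v C1)) = {}"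
    proof -
      { fix z assume z: "z \<in> set (tl (awalk_verts w D2))" "z \<in> set (tl (awalk_verts v C1))"
        have zS: "z \<in> ?S" using z(1) tlD2S by blast
        then have "z = w" using z(2) tlC1 C(4) by blast
        then have False using z(1) wD2 by simp }
      then show ?thesis by blast
    qed
    have d3: "set (tl ?vs) \<inter> set (tl (awalk_verts v C1)) = {}"
    proof -
      { fix z assume z: "z \<in> set (tl ?vs)" "z \<in> set (tl (awalk_verts v C1))"
        have "z \<in> ?Bv" using z(2) tlC1T SB2 by blast
        then have "z = v" using z(1) tlvs int by blast
        then have False using z(2) vC1 by simp }
      then show ?thesis by blast
    qed
    have "distinct (tl (awalk_verts w Cy))"
      unfolding tlCy using d1 d2 d3 distinct_tl[OF distD2] distinct_tl[OF distQ] distinct_tl[OF distC1]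
      by auto
    moreover have "Cy \<noteq> []" unfolding Cy_def using Qne by simp
    ultimately have cyc: "cycle Cy" unfolding cycle_def using Cyw by blast
    have "J_cycle s B Cy = {Q}"
    proof
      show "{Q} \<subseteq> J_cycle s B Cy" unfolding J_cycle_def
      proof -
        have "rotate 0 Cy = D2 @ Q @ C1" unfolding Cy_def by simp
        then show "{Q} \<subseteq> {Q. (\<exists>k xs ys. rotate k Cy = xs @ Q @ ys) \<and> B_piece s B Q \<and> \<not> single_B_arc B Q}"
          using pieceQ ns by blast
      qed
    next
      show "J_cycle s B Cy \<subseteq> {Q}"
      proof
        fix Q' assume "Q' \<in> J_cycle s B Cy"
        then obtain k xs ys where Q': "rotate k Cy = xs @ Q' @ ys" "B_piece s B Q'" "\<not> single_B_arc B Q'"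
          unfolding J_cycle_def by blast
        obtain y where "awalk y (rotate k Cy) y" using rotate_awalk[OF Cyw] by blast
        then have "awalk y (xs @ (Q' @ ys)) y" using Q'(1) by simp
        then have "awalk (awlast y xs) (Q' @ ys) y" by (simp only: awalk_append_iff)
        then have wk: "awalk (awlast y xs) Q' (awlast (awlast y xs) Q')" by (simp only: awalk_append_iff)
        have "set Q' \<subseteq> set (rotate k Cy)" using Q'(1) by auto
        also have "\<dots> = set Cy" by simp
        also have "\<dots> \<subseteq> ?BA \<union> set Q" unfolding Cy_def using A1BA B2BA D(1) C(1) by auto
        finally have "set Q' \<subseteq> ?BA \<union> set Q" .
        then have "Q' = Q" using piece_unique[OF Qp Qne int wk _ Q'(2) Q'(3) fam] by blast
        then show "Q' \<in> {Q}" by simp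
      qed
    qed
    then show ?thesis using cyc by blast
  qed
qed

end

theorem lemma3:
  fixes G :: "('a, 'b) pre_digraph" and s t :: 'a and N :: "'b set" and B :: "'b list set"
    and Q :: "'b list"
  assumes "fin_digraph G"
    and "s \<in> verts G" and "t \<in> verts G"
    and "N \<subseteq> arcs G"
    and "\<forall>e\<in>arcs G. \<exists>P. pre_digraph.apath G s P t \<and> e \<in> set P"
    and "\<forall>P. pre_digraph.apath G s P t \<longrightarrow> set P \<inter> N \<noteq> {}"
    and "pre_digraph.max_N_disj_family G s t N B"
    and "pre_digraph.jump G s B Q"
  shows "(\<exists>P. pre_digraph.apath G s P t \<and> pre_digraph.J_path G s B P = {Q})
       \<or> (\<exists>C. pre_digraph.cycle G C \<and> pre_digraph.J_cycle G s B C = {Q})"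
proof -
  interpret fin_digraph G by (rule assms(1))
  have fam: "\<forall>P\<in>B. apath s P t"
    using assms(7) unfolding max_N_disj_family_def N_disj_family_def by blast
  show ?thesis using main[OF fam assms(8)] .
qed

end
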